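(* Let $A_{\mathbb{Z}}$ and $d_{\mathbb{Z}}:A_{\mathbb{Z}}\to\mathbb{Z}$ be as in the context, let $\lambda$ be the measure on $[0,1)\times A_{\mathbb{Z}}$ given by $\int f\,d\lambda=\int_0^1\sum_{\omega\in A_{\mathbb{Z}}}f(x,\omega)\,dx$, and define $\mathcal E:L^2(\mathbb{R})\to L^2([0,1)\times A_{\mathbb{Z}},\lambda)$ by $\mathcal Ef(x,\omega)=f(x+d_{\mathbb{Z}}(\omega))$. Then $\mathcal E$ is a unitary isomorphism and it intertwines the representations: $\mathcal E\hat T=\tilde T\mathcal E$ and $\mathcal E\hat U=\tilde U\mathcal E$, where on $L^2(\mathbb{R})$, $\hat Tf(\xi)=e^{2\pi i\xi}f(\xi)$, $\hat Uf(\xi)=\sqrt2 f(2\xi)$, and on $L^2([0,1)\times A_{\mathbb{Z}},\lambda)$, $\tilde Tf(x,\omega)=e^{2\pi ix}f(x,\omega)$, $\tilde Uf(x,\omega)=\sqrt2 f(\tilde r(x,\omega))$.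
   Context: Words: $\underline0=000\cdots$, $\underline1=111\cdots$; $A_0=\{\omega_1\cdots\omega_n\underline0\}$, $A_1=\{\omega_1\cdots\omega_n\underline1\}$ ($n\ge0$, $\omega_i\in\{0,1\}$), $A_{\mathbb{Z}}=A_0\cup A_1$. $d_{\mathbb{Z}}(\omega_1\cdots\omega_n\underline0)=\sum_{k=1}^n\omega_k2^{k-1}$ and $d_{\mathbb{Z}}(\omega_1\cdots\omega_n\underline1)=\sum_{k=1}^n\omega_k2^{k-1}-2^n$ (a bijection $A_{\mathbb{Z}}\to\mathbb{Z}$). On $[0,1)$: $r(x)=2x\bmod1$, $\tau_0(x)=x/2$, $\tau_1(x)=(x+1)/2$, and $\omega_x\in\{0,1\}$ is the digit with $\tau_{\omega_x}(r(x))=x$. $\tilde r(x,\omega_1\omega_2\cdots)=(r(x),\omega_x\omega_1\omega_2\cdots)$. *)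

theory Defs
  imports "HOL-Analysis.Analysis"
begin

text \<open>Words \<omega> = \<omega>_1 \<omega>_2 ... are modelled as sequences nat \<Rightarrow> nat with
  \<omega> 0 playing the role of \<omega>_1 (digits in {0,1}).\<close>

definition A0 :: "(nat \<Rightarrow> nat) set" where
  "A0 = {\<omega>. \<exists>n. (\<forall>k<n. \<omega> k \<in> {0,1}) \<and> (\<forall>k\<ge>n. \<omega> k = 0)}"

definition A1 :: "(nat \<Rightarrow> nat) set" where
  "A1 = {\<omega>. \<exists>n. (\<forall>k<n. \<omega> k \<in> {0,1}) \<and> (\<forall>k\<ge>n. \<omega> k = 1)}"

definition AZ :: "(nat \<Rightarrow> nat) set" where
  "AZ = A0 \<union> A1"

text \<open>d_Z: for \<omega> = \<omega>_1..\<omega>_n 0 0 ... it is \<Sum> \<omega>_k 2^(k-1); for \<omega>_1..\<omega>_n 1 1 ...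
  it is \<Sum> \<omega>_k 2^(k-1) - 2^n. (Independent of the chosen n; we use the least one.)\<close>
definition dZ :: "(nat \<Rightarrow> nat) \<Rightarrow> int" where
  "dZ \<omega> =
    (if \<omega> \<in> A0 then
       (let n = (LEAST n. \<forall>k\<ge>n. \<omega> k = 0) in (\<Sum>k<n. int (\<omega> k) * 2 ^ k))
     else
       (let n = (LEAST n. \<forall>k\<ge>n. \<omega> k = 1) in (\<Sum>k<n. int (\<omega> k) * 2 ^ k) - 2 ^ n))"

definition r :: "real \<Rightarrow> real" where
  "r x = frac (2 * x)"

definition tau :: "nat \<Rightarrow> real \<Rightarrow> real" where
  "tau w x = (x + real w) / 2"

definition digit :: "real \<Rightarrow> nat" where
  "digit x = (THE w. w \<in> {0,1} \<and> tau w (r x) = x)"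

definition rtilde :: "real \<times> (nat \<Rightarrow> nat) \<Rightarrow> real \<times> (nat \<Rightarrow> nat)" where
  "rtilde p = (r (fst p), case_nat (digit (fst p)) (snd p))"

definition lam :: "(real \<times> (nat \<Rightarrow> nat)) measure" where
  "lam = restrict_space lborel {0..<1} \<Otimes>\<^sub>M count_space AZ"

definition square_integrable :: "'a measure \<Rightarrow> ('a \<Rightarrow> complex) \<Rightarrow> bool" where
  "square_integrable M f \<longleftrightarrow> f \<in> borel_measurable M \<and> integrable M (\<lambda>x. (cmod (f x))^2)"

definition L2norm_sq :: "'a measure \<Rightarrow> ('a \<Rightarrow> complex) \<Rightarrow> real" where
  "L2norm_sq M f = (\<integral>x. (cmod (f x))^2 \<partial>M)"

definition E :: "(real \<Rightarrow> complex) \<Rightarrow> real \<times> (nat \<Rightarrow> nat) \<Rightarrow> complex" where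
  "E f p = f (fst p + of_int (dZ (snd p)))"

definition That :: "(real \<Rightarrow> complex) \<Rightarrow> real \<Rightarrow> complex" where
  "That f \<xi> = exp (2 * pi * \<i> * of_real \<xi>) * f \<xi>"

definition Uhat :: "(real \<Rightarrow> complex) \<Rightarrow> real \<Rightarrow> complex" where
  "Uhat f \<xi> = of_real (sqrt 2) * f (2 * \<xi>)"

definition Ttilde :: "(real \<times> (nat \<Rightarrow> nat) \<Rightarrow> complex) \<Rightarrow> real \<times> (nat \<Rightarrow> nat) \<Rightarrow> complex" where
  "Ttilde g p = exp (2 * pi * \<i> * of_real (fst p)) * g p"

definition Utilde :: "(real \<times> (nat \<Rightarrow> nat) \<Rightarrow> complex) \<Rightarrow> real \<times> (nat \<Rightarrow> nat) \<Rightarrow> complex" where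
  "Utilde g p = of_real (sqrt 2) * g (rtilde p)"

end

theory Submission
  imports Defs
begin


lemma A0A1_disj: "\<omega> \<in> A0 \<Longrightarrow> \<omega> \<notin> A1"
proof
  assume "\<omega> \<in> A0" "\<omega> \<in> A1"
  then obtain n m where "\<forall>k\<ge>n. \<omega> k = 0" "\<forall>k\<ge>m. \<omega> k = 1"
    unfolding A0_def A1_def by blast
  then have "\<omega> (max n m) = 0 \<and> \<omega> (max n m) = 1" by (meson max.cobounded1 max.cobounded2)
  then show False by linarith
qed

lemma dZ_A0:
  assumes "\<omega> \<in> A0" "\<forall>k\<ge>n. \<omega> k = 0"
  shows "dZ \<omega> = (\<Sum>k<n. int (\<omega> k) * 2 ^ k)"
proof -
  define n0 where "n0 = (LEAST n. \<forall>k\<ge>n. \<omega> k = 0)"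
  have le: "n0 \<le> n" unfolding n0_def by (rule Least_le) (use assms in auto)
  have d: "dZ \<omega> = (\<Sum>k<n0. int (\<omega> k) * 2 ^ k)"
    unfolding dZ_def n0_def using assms by simp
  have z: "\<forall>k\<ge>n0. \<omega> k = 0" unfolding n0_def by (rule LeastI) (use assms in auto)
  have "(\<Sum>k<n. int (\<omega> k) * 2 ^ k) = (\<Sum>k<n0. int (\<omega> k) * 2 ^ k)"
    by (rule sum.mono_neutral_right) (use le z in auto)
  then show ?thesis using d by simp
qed

lemma dZ_A1:
  assumes "\<omega> \<in> A1" "\<forall>k\<ge>n. \<omega> k = 1"
  shows "dZ \<omega> = (\<Sum>k<n. int (\<omega> k) * 2 ^ k) - 2 ^ n"
proof -
  define n0 where "n0 = (LEAST n. \<forall>k\<ge>n. \<omega> k = 1)"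
  have le: "n0 \<le> n" unfolding n0_def by (rule Least_le) (use assms in auto)
  have d: "dZ \<omega> = (\<Sum>k<n0. int (\<omega> k) * 2 ^ k) - 2 ^ n0"
    unfolding dZ_def n0_def using assms A0A1_disj by (auto simp: Let_def)
  have z: "\<forall>k\<ge>n0. \<omega> k = 1" unfolding n0_def by (rule LeastI) (use assms in auto)
  have "(\<Sum>k<m. int (\<omega> k) * 2 ^ k) - 2 ^ m = (\<Sum>k<n0. int (\<omega> k) * 2 ^ k) - 2 ^ n0"
    if "n0 \<le> m" for m
    using that
  proof (induction m rule: dec_induct)
    case (step m)
    then show ?case using z by simp
  qed simp
  from this[OF le] show ?thesis using d by simp
qed

lemma cons_A0: assumes "d \<in> {0,1}" shows "case_nat d \<omega> \<in> A0 \<longleftrightarrow> \<omega> \<in> A0"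
proof
  assume "case_nat d \<omega> \<in> A0"
  then obtain n where h1: "\<forall>k<n. case_nat d \<omega> k \<in> {0, 1}" and h2: "\<forall>k\<ge>n. case_nat d \<omega> k = 0"
    unfolding A0_def by blast
  have "(\<forall>k<n-1. \<omega> k \<in> {0, 1}) \<and> (\<forall>k\<ge>n-1. \<omega> k = 0)"
  proof (intro conjI allI impI)
    fix k assume "k < n - 1" then have "Suc k < n" by simp
    then show "\<omega> k \<in> {0,1}" using h1 by fastforce
  next
    fix k assume "n - 1 \<le> k" then have "n \<le> Suc k" by simp
    then show "\<omega> k = 0" using h2 by fastforce
  qed
  then show "\<omega> \<in> A0" unfolding A0_def by blast
next
  assume "\<omega> \<in> A0"
  then obtain n where h1: "\<forall>k<n. \<omega> k \<in> {0, 1}" and h2: "\<forall>k\<ge>n. \<omega> k = 0"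
    unfolding A0_def by blast
  have "(\<forall>k<Suc n. case_nat d \<omega> k \<in> {0, 1}) \<and> (\<forall>k\<ge>Suc n. case_nat d \<omega> k = 0)"
    using h1 h2 assms by (auto split: nat.splits)
  then show "case_nat d \<omega> \<in> A0" unfolding A0_def by blast
qed

lemma cons_A1: assumes "d \<in> {0,1}" shows "case_nat d \<omega> \<in> A1 \<longleftrightarrow> \<omega> \<in> A1"
proof
  assume "case_nat d \<omega> \<in> A1"
  then obtain n where h1: "\<forall>k<n. case_nat d \<omega> k \<in> {0, 1}" and h2: "\<forall>k\<ge>n. case_nat d \<omega> k = 1"
    unfolding A1_def by blast
  have "(\<forall>k<n-1. \<omega> k \<in> {0, 1}) \<and> (\<forall>k\<ge>n-1. \<omega> k = 1)"
  proof (intro conjI allI impI)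
    fix k assume "k < n - 1" then have "Suc k < n" by simp
    then show "\<omega> k \<in> {0,1}" using h1 by fastforce
  next
    fix k assume "n - 1 \<le> k" then have "n \<le> Suc k" by simp
    then show "\<omega> k = 1" using h2 by fastforce
  qed
  then show "\<omega> \<in> A1" unfolding A1_def by blast
next
  assume "\<omega> \<in> A1"
  then obtain n where h1: "\<forall>k<n. \<omega> k \<in> {0, 1}" and h2: "\<forall>k\<ge>n. \<omega> k = 1"
    unfolding A1_def by blast
  have "(\<forall>k<Suc n. case_nat d \<omega> k \<in> {0, 1}) \<and> (\<forall>k\<ge>Suc n. case_nat d \<omega> k = 1)"
    using h1 h2 assms by (auto split: nat.splits)
  then show "case_nat d \<omega> \<in> A1" unfolding A1_def by blast
qed

lemma cons_AZ: "d \<in> {0,1} \<Longrightarrow> case_nat d \<omega> \<in> AZ \<longleftrightarrow> \<omega> \<in> AZ"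
  unfolding AZ_def using cons_A0 cons_A1 by blast

lemma sum_shift: "(\<Sum>k<Suc n. int (case_nat d \<omega> k) * 2 ^ k) = int d + 2 * (\<Sum>k<n. int (\<omega> k) * 2 ^ k)"
  by (subst sum.lessThan_Suc_shift) (simp add: sum_distrib_left mult.left_commute)

lemma dZ_cons:
  assumes d: "d \<in> {0,1}" and w: "\<omega> \<in> AZ"
  shows "dZ (case_nat d \<omega>) = int d + 2 * dZ \<omega>"
proof (cases "\<omega> \<in> A0")
  case True
  then obtain n where h: "\<forall>k\<ge>n. \<omega> k = 0" unfolding A0_def by blast
  have h': "\<forall>k\<ge>Suc n. case_nat d \<omega> k = 0" using h by (auto split: nat.splits)
  show ?thesis
    using dZ_A0[OF True h] dZ_A0[OF cons_A0[OF d, THEN iffD2, OF True] h'] sum_shift by simp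
next
  case False
  then have T: "\<omega> \<in> A1" using w unfolding AZ_def by blast
  then obtain n where h: "\<forall>k\<ge>n. \<omega> k = 1" unfolding A1_def by blast
  have h': "\<forall>k\<ge>Suc n. case_nat d \<omega> k = 1" using h by (auto split: nat.splits)
  show ?thesis
    using dZ_A1[OF T h] dZ_A1[OF cons_A1[OF d, THEN iffD2, OF T] h'] sum_shift by simp
qed

lemma m1div: "(-1::int) div 2 ^ k = -1"
  by (rule div_eq_minus1) simp

definition bits :: "int \<Rightarrow> nat \<Rightarrow> nat" where
  "bits m k = nat ((m div 2 ^ k) mod 2)"

lemma bits_rec: "bits m = case_nat (nat (m mod 2)) (bits (m div 2))"
proof (rule ext)
  fix k show "bits m k = case_nat (nat (m mod 2)) (bits (m div 2)) k"
    by (cases k) (simp_all add: bits_def zdiv_zmult2_eq)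
qed

lemma bits_cons: "d \<in> {0,1} \<Longrightarrow> bits (int d + 2 * m) = case_nat d (bits m)"
  by (subst bits_rec) auto

lemma bits_in_AZ: "bits m \<in> AZ \<and> dZ (bits m) = m"
proof (induction "nat \<bar>m\<bar>" arbitrary: m rule: less_induct)
  case less
  show ?case
  proof (cases "m = 0 \<or> m = -1")
    case True
    then show ?thesis
    proof
      assume m: "m = 0"
      have b: "bits m = (\<lambda>_. 0)" by (rule ext) (simp add: bits_def m m1div)
      have "bits m \<in> A0" unfolding b A0_def by auto
      then show ?thesis using dZ_A0[of "bits m" 0] b m unfolding AZ_def by simp
    next
      assume m: "m = -1"
      have b: "bits m = (\<lambda>_. 1)" by (rule ext) (simp add: bits_def m m1div)
      have "bits m \<in> A1" unfolding b A1_def by auto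
      then show ?thesis using dZ_A1[of "bits m" 0] b m unfolding AZ_def by simp
    qed
  next
    case False
    have "nat \<bar>m div 2\<bar> < nat \<bar>m\<bar>" using False by auto
    from less[OF this] have IH: "bits (m div 2) \<in> AZ" "dZ (bits (m div 2)) = m div 2" by auto
    have d: "nat (m mod 2) \<in> {0,1}" by auto
    have "bits m \<in> AZ" using bits_rec[of m] cons_AZ[OF d] IH by simp
    moreover have "dZ (bits m) = m"
      using bits_rec[of m] dZ_cons[OF d IH(1)] IH(2) by simp
    ultimately show ?thesis by simp
  qed
qed

lemma bits_dZ0: "\<forall>\<omega>. \<omega> \<in> A0 \<and> (\<forall>k\<ge>n. \<omega> k = 0) \<longrightarrow> bits (dZ \<omega>) = \<omega>"
proof (induction n)
  case 0
  show ?case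
  proof (intro allI impI)
    fix \<omega> :: "nat \<Rightarrow> nat" assume a: "\<omega> \<in> A0 \<and> (\<forall>k\<ge>0. \<omega> k = 0)"
    then have "\<omega> = (\<lambda>_. 0)" by auto
    moreover have "dZ \<omega> = 0" using dZ_A0[of \<omega> 0] a by simp
    ultimately show "bits (dZ \<omega>) = \<omega>" by (auto simp: bits_def m1div)
  qed
next
  case (Suc n)
  show ?case
  proof (intro allI impI)
    fix \<omega> :: "nat \<Rightarrow> nat" assume a: "\<omega> \<in> A0 \<and> (\<forall>k\<ge>Suc n. \<omega> k = 0)"
    define t where "t = (\<lambda>k. \<omega> (Suc k))"
    have eq: "\<omega> = case_nat (\<omega> 0) t" by (rule ext) (simp add: t_def split: nat.split)
    have d: "\<omega> 0 \<in> {0,1}"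
    proof -
      obtain n' where "\<forall>k<n'. \<omega> k \<in> {0,1}" "\<forall>k\<ge>n'. \<omega> k = 0" using a unfolding A0_def by blast
      then show ?thesis by (cases "0 < n'") auto
    qed
    have tA: "t \<in> A0" using a cons_A0[OF d, of t] eq by simp
    have tz: "\<forall>k\<ge>n. t k = 0" using a by (simp add: t_def)
    have "bits (dZ t) = t" using Suc tA tz by blast
    moreover have "dZ \<omega> = int (\<omega> 0) + 2 * dZ t"
      using dZ_cons[OF d, of t] tA eq unfolding AZ_def by simp
    ultimately show "bits (dZ \<omega>) = \<omega>" using bits_cons[OF d] eq by metis
  qed
qed

lemma bits_dZ1: "\<forall>\<omega>. \<omega> \<in> A1 \<and> (\<forall>k\<ge>n. \<omega> k = 1) \<longrightarrow> bits (dZ \<omega>) = \<omega>"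
proof (induction n)
  case 0
  show ?case
  proof (intro allI impI)
    fix \<omega> :: "nat \<Rightarrow> nat" assume a: "\<omega> \<in> A1 \<and> (\<forall>k\<ge>0. \<omega> k = 1)"
    then have "\<omega> = (\<lambda>_. 1)" by auto
    moreover have "dZ \<omega> = -1" using dZ_A1[of \<omega> 0] a by simp
    ultimately show "bits (dZ \<omega>) = \<omega>" by (auto simp: bits_def m1div)
  qed
next
  case (Suc n)
  show ?case
  proof (intro allI impI)
    fix \<omega> :: "nat \<Rightarrow> nat" assume a: "\<omega> \<in> A1 \<and> (\<forall>k\<ge>Suc n. \<omega> k = 1)"
    define t where "t = (\<lambda>k. \<omega> (Suc k))"
    have eq: "\<omega> = case_nat (\<omega> 0) t" by (rule ext) (simp add: t_def split: nat.split)
    have d: "\<omega> 0 \<in> {0,1}"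
    proof -
      obtain n' where "\<forall>k<n'. \<omega> k \<in> {0,1}" "\<forall>k\<ge>n'. \<omega> k = 1" using a unfolding A1_def by blast
      then show ?thesis by (cases "0 < n'") auto
    qed
    have tA: "t \<in> A1" using a cons_A1[OF d, of t] eq by simp
    have tz: "\<forall>k\<ge>n. t k = 1" using a by (simp add: t_def)
    have "bits (dZ t) = t" using Suc tA tz by blast
    moreover have "dZ \<omega> = int (\<omega> 0) + 2 * dZ t"
      using dZ_cons[OF d, of t] tA eq unfolding AZ_def by simp
    ultimately show "bits (dZ \<omega>) = \<omega>" using bits_cons[OF d] eq by metis
  qed
qed

lemma bits_dZ: "\<omega> \<in> AZ \<Longrightarrow> bits (dZ \<omega>) = \<omega>"
proof -
  assume "\<omega> \<in> AZ"
  then consider "\<omega> \<in> A0" | "\<omega> \<in> A1" unfolding AZ_def by blast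
  then show ?thesis
  proof cases
    case 1
    then obtain n where "\<forall>k\<ge>n. \<omega> k = 0" unfolding A0_def by blast
    then show ?thesis using bits_dZ0[of n] 1 by blast
  next
    case 2
    then obtain n where "\<forall>k\<ge>n. \<omega> k = 1" unfolding A1_def by blast
    then show ?thesis using bits_dZ1[of n] 2 by blast
  qed
qed

lemma bij_dZ: "bij_betw dZ AZ UNIV"
  by (rule bij_betw_byWitness[where f'=bits]) (use bits_dZ bits_in_AZ in auto)

lemma countable_AZ: "countable AZ"
proof -
  have "AZ \<subseteq> range bits"
  proof
    fix w assume "w \<in> AZ" then have "w = bits (dZ w)" using bits_dZ by simp
    then show "w \<in> range bits" by blast
  qed
  moreover have "range bits \<subseteq> AZ" using bits_in_AZ by blast
  ultimately have e: "AZ = range bits" by blast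
  show ?thesis unfolding e by (rule countable_image) simp
qed



lemma sf_count_int: "sigma_finite_measure (count_space (UNIV::int set))"
  by (rule sigma_finite_measure_count_space_countable) simp

lemma sf_R: "sigma_finite_measure (restrict_space lborel {0..<1::real})"
  by (rule sigma_finite_measure_restrict_space[OF sigma_finite_lborel]) simp

lemma sf_AZ: "sigma_finite_measure (count_space AZ)"
  by (rule sigma_finite_measure_count_space_countable[OF countable_AZ])

lemma key:
  fixes h :: "real \<Rightarrow> ennreal"
  assumes hm[measurable]: "h \<in> borel_measurable borel"
  shows "(\<integral>\<^sup>+p. h (fst p + real_of_int (dZ (snd p))) \<partial>lam) = (\<integral>\<^sup>+t. h t \<partial>lborel)"
proof -
  let ?R = "restrict_space lborel {0..<1::real}"
  let ?C = "count_space (UNIV::int set)"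
  interpret P1: pair_sigma_finite lborel ?C using sigma_finite_lborel sf_count_int
    by (simp add: pair_sigma_finite_def)
  have phi: "(\<lambda>p. fst p + real_of_int (dZ (snd p))) \<in> borel_measurable (?R \<Otimes>\<^sub>M count_space AZ)"
  proof (rule borel_measurable_add)
    have "(\<lambda>x::real. x) \<in> borel_measurable ?R"
      by (rule measurable_restrict_space1) simp
    then show "(\<lambda>p. fst p) \<in> borel_measurable (?R \<Otimes>\<^sub>M count_space AZ)"
      by (rule measurable_compose[OF measurable_fst])
    have "(\<lambda>w. real_of_int (dZ w)) \<in> borel_measurable (count_space AZ)" by simp
    then show "(\<lambda>p. real_of_int (dZ (snd p))) \<in> borel_measurable (?R \<Otimes>\<^sub>M count_space AZ)"
      by (rule measurable_compose[OF measurable_snd])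
  qed
  have m1: "(\<lambda>p. h (fst p + real_of_int (dZ (snd p)))) \<in> borel_measurable (?R \<Otimes>\<^sub>M count_space AZ)"
    using measurable_compose[OF phi hm] by simp
  have "(\<integral>\<^sup>+p. h (fst p + real_of_int (dZ (snd p))) \<partial>lam)
      = (\<integral>\<^sup>+x. \<integral>\<^sup>+w. h (x + real_of_int (dZ w)) \<partial>count_space AZ \<partial>?R)"
    unfolding lam_def using sigma_finite_measure.nn_integral_fst[OF sf_AZ m1] by simp
  also have "\<dots> = (\<integral>\<^sup>+x. \<integral>\<^sup>+n. h (x + real_of_int n) \<partial>?C \<partial>?R)"
    by (rule nn_integral_cong, rule nn_integral_bij_count_space[OF bij_dZ])
  also have "\<dots> = (\<integral>\<^sup>+x. (\<integral>\<^sup>+n. h (x + real_of_int n) \<partial>?C) * indicator {0..<1} x \<partial>lborel)"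
    by (rule nn_integral_restrict_space) simp
  also have "\<dots> = (\<integral>\<^sup>+x. \<integral>\<^sup>+n. h (x + real_of_int n) * indicator {0..<1} x \<partial>?C \<partial>lborel)"
    by (rule nn_integral_cong, rule nn_integral_multc[symmetric]) simp
  also have "\<dots> = (\<integral>\<^sup>+n. \<integral>\<^sup>+x. h (x + real_of_int n) * indicator {0..<1} x \<partial>lborel \<partial>?C)"
    by (rule P1.Fubini[symmetric, where f="\<lambda>(x,n). h (x + real_of_int n) * indicator {0..<1} x", simplified])
       measurable
  also have "\<dots> = (\<integral>\<^sup>+n. \<integral>\<^sup>+t. h t * indicator {real_of_int n..<real_of_int n + 1} t \<partial>lborel \<partial>?C)"
  proof (rule nn_integral_cong)
    fix n :: int
    define g where "g t = h t * indicator {real_of_int n..<real_of_int n + 1} t" for t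
    have gm: "g \<in> borel_measurable borel" unfolding g_def by measurable
    have "(\<integral>\<^sup>+t. h t * indicator {real_of_int n..<real_of_int n + 1} t \<partial>lborel)
       = (\<integral>\<^sup>+x. h (real_of_int n + x) * indicator {real_of_int n..<real_of_int n + 1} (real_of_int n + x) \<partial>lborel)"
      using nn_integral_real_affine[OF gm, of 1 "real_of_int n"] unfolding g_def by simp
    also have "\<dots> = (\<integral>\<^sup>+x. h (x + real_of_int n) * indicator {0..<1} x \<partial>lborel)"
      by (rule nn_integral_cong) (simp add: indicator_def add.commute)
    finally show "(\<integral>\<^sup>+x. h (x + real_of_int n) * indicator {0..<1} x \<partial>lborel)
       = (\<integral>\<^sup>+t. h t * indicator {real_of_int n..<real_of_int n + 1} t \<partial>lborel)" by simp
  qed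
  also have "\<dots> = (\<integral>\<^sup>+t. \<integral>\<^sup>+n. h t * indicator {real_of_int n..<real_of_int n + 1} t \<partial>?C \<partial>lborel)"
    by (rule P1.Fubini[where f="\<lambda>(t,n). h t * indicator {real_of_int n..<real_of_int n + 1} t", simplified])
       measurable
  also have "\<dots> = (\<integral>\<^sup>+t. h t \<partial>lborel)"
  proof (rule nn_integral_cong)
    fix t :: real
    have "(\<integral>\<^sup>+n. h t * indicator {real_of_int n..<real_of_int n + 1} t \<partial>?C)
        = (\<integral>\<^sup>+n. h t * indicator {\<lfloor>t\<rfloor>} n \<partial>?C)"
      by (rule nn_integral_cong) (auto simp: indicator_def floor_eq_iff dest: floor_unique)
    also have "\<dots> = h t" by simp
    finally show "(\<integral>\<^sup>+n. h t * indicator {real_of_int n..<real_of_int n + 1} t \<partial>?C) = h t" .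
  qed
  finally show ?thesis .
qed



lemma space_lam: "space lam = {0..<1} \<times> AZ"
  unfolding lam_def by (simp add: space_pair_measure space_restrict_space)

lemma phi_meas: "(\<lambda>p. fst p + real_of_int (dZ (snd p))) \<in> borel_measurable lam"
  unfolding lam_def
proof (rule borel_measurable_add)
  have "(\<lambda>x::real. x) \<in> borel_measurable (restrict_space lborel {0..<1::real})"
    by (rule measurable_restrict_space1) simp
  then show "(\<lambda>p. fst p) \<in> borel_measurable (restrict_space lborel {0..<1::real} \<Otimes>\<^sub>M count_space AZ)"
    by (rule measurable_compose[OF measurable_fst])
  have "(\<lambda>w. real_of_int (dZ w)) \<in> borel_measurable (count_space AZ)" by simp
  then show "(\<lambda>p. real_of_int (dZ (snd p))) \<in> borel_measurable (restrict_space lborel {0..<1::real} \<Otimes>\<^sub>M count_space AZ)"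
    by (rule measurable_compose[OF measurable_snd])
qed

lemma E_meas: "f \<in> borel_measurable borel \<Longrightarrow> E f \<in> borel_measurable lam"
  unfolding E_def using measurable_compose[OF phi_meas] by blast

lemma key_lam: "f \<in> borel_measurable borel \<Longrightarrow>
  (\<integral>\<^sup>+p. ennreal ((cmod (E f p))^2) \<partial>lam) = (\<integral>\<^sup>+t. ennreal ((cmod (f t))^2) \<partial>lborel)"
  unfolding E_def by (rule key) measurable

lemma sq_int_iff:
  fixes u :: "'a \<Rightarrow> complex"
  assumes "u \<in> borel_measurable M"
  shows "integrable M (\<lambda>x. (cmod (u x))^2) \<longleftrightarrow> (\<integral>\<^sup>+x. ennreal ((cmod (u x))^2) \<partial>M) < \<infinity>"
  using assms by (simp add: integrable_iff_bounded)

lemma sq_int_eq: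
  fixes u :: "'a \<Rightarrow> complex"
  assumes "u \<in> borel_measurable M"
  shows "(\<integral>x. (cmod (u x))^2 \<partial>M) = enn2real (\<integral>\<^sup>+x. ennreal ((cmod (u x))^2) \<partial>M)"
  using assms by (intro integral_eq_nn_integral) auto

lemma digit_eq: assumes "0 \<le> x" "x < 1" shows "digit x = nat \<lfloor>2*x\<rfloor>"
proof -
  have fl: "\<lfloor>2*x\<rfloor> \<in> {0,1}" using assms by (auto simp: floor_eq_iff)
  have P: "nat \<lfloor>2*x\<rfloor> \<in> {0,1} \<and> tau (nat \<lfloor>2*x\<rfloor>) (r x) = x"
  proof
    have gen: "\<And>k::int. k \<in> {0,1} \<Longrightarrow> nat k \<in> {0,1} \<and> real (nat k) = of_int k" by auto
    show "nat \<lfloor>2*x\<rfloor> \<in> {0,1}" using gen[OF fl] by blast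
    have "real (nat \<lfloor>2*x\<rfloor>) = of_int \<lfloor>2*x\<rfloor>" using gen[OF fl] by blast
    then show "tau (nat \<lfloor>2*x\<rfloor>) (r x) = x" by (simp add: tau_def r_def frac_def)
  qed
  show ?thesis unfolding digit_def
  proof (rule the_equality)
    show "nat \<lfloor>2*x\<rfloor> \<in> {0,1} \<and> tau (nat \<lfloor>2*x\<rfloor>) (r x) = x" by (rule P)
  next
    fix w assume "w \<in> {0,1} \<and> tau w (r x) = x"
    then have "real w = of_int \<lfloor>2*x\<rfloor>" by (simp add: tau_def r_def frac_def field_simps)
    then show "w = nat \<lfloor>2*x\<rfloor>" by linarith
  qed
qed

lemma r_eq: "r x = 2*x - of_int \<lfloor>2*x\<rfloor>" by (simp add: r_def frac_def)

lemma part1: "E (\<lambda>t. a * f t + b * g t) = (\<lambda>p. a * E f p + b * E g p)"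
  by (rule ext) (simp add: E_def)

lemma part2:
  assumes "square_integrable lborel f"
  shows "square_integrable lam (E f) \<and> L2norm_sq lam (E f) = L2norm_sq lborel f"
proof -
  have fm: "f \<in> borel_measurable borel" using assms unfolding square_integrable_def by simp
  have fm': "f \<in> borel_measurable lborel" using fm by simp
  have m: "E f \<in> borel_measurable lam" by (rule E_meas[OF fm])
  have fin: "(\<integral>\<^sup>+t. ennreal ((cmod (f t))^2) \<partial>lborel) < \<infinity>"
    using assms sq_int_iff[OF fm'] unfolding square_integrable_def by simp
  have "square_integrable lam (E f)"
    unfolding square_integrable_def using m sq_int_iff[OF m] key_lam[OF fm] fin by simp
  moreover have "L2norm_sq lam (E f) = L2norm_sq lborel f"
    unfolding L2norm_sq_def sq_int_eq[OF m] sq_int_eq[OF fm'] key_lam[OF fm] ..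
  ultimately show ?thesis by simp
qed

lemma psi_meas: "(\<lambda>t. (frac t, bits \<lfloor>t\<rfloor>)) \<in> measurable borel lam"
  unfolding lam_def
proof (rule measurable_Pair)
  have "(frac :: real \<Rightarrow> real) \<in> borel_measurable borel"
    unfolding frac_def[abs_def] by (rule borel_measurable_diff[OF measurable_ident_sets[OF refl] borel_measurable_real_floor])
  then show "(frac :: real \<Rightarrow> real) \<in> measurable borel (restrict_space lborel {0..<1})"
    by (intro measurable_restrict_space2) (auto simp: frac_lt_1)
  have "bits \<in> measurable (count_space UNIV) (count_space AZ)"
    using bits_in_AZ by simp
  then show "(\<lambda>t::real. bits \<lfloor>t\<rfloor>) \<in> measurable borel (count_space AZ)"
    by (rule measurable_compose[OF measurable_real_floor])
qed

lemma part3: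
  assumes "square_integrable lam g"
  shows "\<exists>f. square_integrable lborel f \<and> (AE p in lam. E f p = g p)"
proof -
  define f where "f t = g (frac t, bits \<lfloor>t\<rfloor>)" for t
  have gm: "g \<in> borel_measurable lam" using assms unfolding square_integrable_def by simp
  have fm: "f \<in> borel_measurable borel"
    unfolding f_def using measurable_compose[OF psi_meas gm] by simp
  have fm': "f \<in> borel_measurable lborel" using fm by simp
  have eq: "E f p = g p" if "p \<in> space lam" for p
  proof -
    obtain x w where p: "p = (x, w)" "0 \<le> x" "x < 1" "w \<in> AZ" using \<open>p \<in> space lam\<close> unfolding space_lam by auto
    have "frac (x + real_of_int (dZ w)) = x" using p by (simp add: frac_eq)
    moreover have "\<lfloor>x + real_of_int (dZ w)\<rfloor> = dZ w" using p by (simp add: floor_eq_iff)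
    ultimately show ?thesis using p bits_dZ by (simp add: E_def f_def)
  qed
  have "(\<integral>\<^sup>+p. ennreal ((cmod (E f p))^2) \<partial>lam) = (\<integral>\<^sup>+p. ennreal ((cmod (g p))^2) \<partial>lam)"
    by (rule nn_integral_cong) (simp add: eq)
  moreover have "(\<integral>\<^sup>+p. ennreal ((cmod (g p))^2) \<partial>lam) < \<infinity>"
    using assms sq_int_iff[OF gm] unfolding square_integrable_def by simp
  ultimately have "square_integrable lborel f"
    unfolding square_integrable_def using fm' sq_int_iff[OF fm'] key_lam[OF fm] by simp
  moreover have "AE p in lam. E f p = g p" by (rule AE_I2) (rule eq)
  ultimately show ?thesis by blast
qed

lemma part4: "AE p in lam. E (That f) p = Ttilde (E f) p"
proof (rule AE_I2)
  fix p :: "real \<times> (nat \<Rightarrow> nat)"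
  obtain x w where p: "p = (x, w)" by (cases p)
  have "exp (2 * pi * \<i> * complex_of_real (x + real_of_int (dZ w)))
      = exp (2 * pi * \<i> * complex_of_real x) * exp ((2 * of_int (dZ w) * pi) * \<i>)"
    by (simp add: exp_add[symmetric] algebra_simps)
  also have "exp ((2 * of_int (dZ w) * pi) * \<i>) = 1" by (rule exp_integer_2pi) simp
  finally show "E (That f) p = Ttilde (E f) p"
    by (simp add: p E_def That_def Ttilde_def)
qed

lemma part5: "AE p in lam. E (Uhat f) p = Utilde (E f) p"
proof (rule AE_I2)
  fix p assume "p \<in> space lam"
  then obtain x w where p: "p = (x, w)" "0 \<le> x" "x < 1" "w \<in> AZ" unfolding space_lam by auto
  have d: "digit x \<in> {0,1}" and dr: "real (digit x) = of_int \<lfloor>2*x\<rfloor>"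
  proof -
    have fl: "\<lfloor>2*x\<rfloor> \<in> {0,1}" using p by (auto simp: floor_eq_iff)
    have gen: "\<And>k::int. k \<in> {0,1} \<Longrightarrow> nat k \<in> {0,1} \<and> real (nat k) = of_int k" by auto
    show "digit x \<in> {0,1}" "real (digit x) = of_int \<lfloor>2*x\<rfloor>"
      using gen[OF fl] digit_eq[OF p(2,3)] by simp_all
  qed
  have "r x + real_of_int (dZ (case_nat (digit x) w)) = 2 * (x + real_of_int (dZ w))"
    using dZ_cons[OF d p(4)] dr by (simp add: r_eq)
  then show "E (Uhat f) p = Utilde (E f) p"
    by (simp add: p E_def Uhat_def Utilde_def rtilde_def)
qed


theorem proposition3p13:
  shows "(\<forall>f g a b. E (\<lambda>t. a * f t + b * g t) = (\<lambda>p. a * E f p + b * E g p))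
    \<and> (\<forall>f. square_integrable lborel f \<longrightarrow>
          square_integrable lam (E f) \<and> L2norm_sq lam (E f) = L2norm_sq lborel f)
    \<and> (\<forall>g. square_integrable lam g \<longrightarrow>
          (\<exists>f. square_integrable lborel f \<and> (AE p in lam. E f p = g p)))
    \<and> (\<forall>f. square_integrable lborel f \<longrightarrow> (AE p in lam. E (That f) p = Ttilde (E f) p))
    \<and> (\<forall>f. square_integrable lborel f \<longrightarrow> (AE p in lam. E (Uhat f) p = Utilde (E f) p))"
  using part1 part2 part3 part4 part5 by blast

end
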